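(* Let $X$, $Z$ be topological vector spaces, $C\subseteq Z$ a nonempty closed convex cone with $C^-\neq\{0\}$, $f:X\to\mathcal{F}(Z,C)$ and $x_0\in X$. If $f$ is lattice-bounded above on some neighborhood of $x_0$, then $f$ is efficient at $x_0$. If $\operatorname{Int}C\neq\emptyset$, then conversely efficiency of $f$ at $x_0$ implies that $f$ is lattice-bounded above on some neighborhood of $x_0$.
   Context: $\mathcal{F}(Z,C)=\{A\subseteq Z\colon A=\operatorname{cl}(A+C)\}$ (empty set included); $C^-=\{z^*\in Z^*\colon z^*(z)\le0\ \forall z\in C\}$. $f$ is lattice-bounded above on $M\subseteq X$ iff there is $a\in Z$ with $a\in f(x)$ for all $x\in M$. $f$ is efficient at $x_0$ iff there exist a neighborhood $U$ of $x_0$ and a bounded set $B\subseteq Z$ (absorbed by every neighborhood of $0$) with $f(x)\cap B\neq\emptyset$ for all $x\in U$. *)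

theory Defs
  imports "HOL-Analysis.Analysis"
begin

definition tvs :: "'a::{real_vector,topological_space} itself \<Rightarrow> bool" where
  "tvs _ \<longleftrightarrow> continuous_on UNIV (\<lambda>p::'a \<times> 'a. fst p + snd p) \<and>
              continuous_on UNIV (\<lambda>p::real \<times> 'a. fst p *\<^sub>R snd p)"

definition msum :: "'a::real_vector set \<Rightarrow> 'a set \<Rightarrow> 'a set" where
  "msum A B = {a + b | a b. a \<in> A \<and> b \<in> B}"

text \<open>F(Z,C) = {A \<subseteq> Z. A = cl(A + C)} (the empty set included).\<close>
definition FZC :: "'a::{real_vector,topological_space} set \<Rightarrow> 'a set set" where
  "FZC C = {A. A = closure (msum A C)}"

definition topdual :: "('a::{real_vector,topological_space} \<Rightarrow> real) set" where
  "topdual = {g. linear g \<and> continuous_on UNIV g}"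

definition negdual :: "'a::{real_vector,topological_space} set \<Rightarrow> ('a \<Rightarrow> real) set" where
  "negdual C = {g \<in> topdual. \<forall>z\<in>C. g z \<le> 0}"

definition tvs_bounded :: "'a::{real_vector,topological_space} set \<Rightarrow> bool" where
  "tvs_bounded B \<longleftrightarrow> (\<forall>U. open U \<and> 0 \<in> U \<longrightarrow>
      (\<exists>r>0. \<forall>t\<ge>r. B \<subseteq> (\<lambda>u. t *\<^sub>R u) ` U))"

definition lattice_bounded_above_on ::
  "('x \<Rightarrow> 'z set) \<Rightarrow> 'x set \<Rightarrow> bool" where
  "lattice_bounded_above_on f M \<longleftrightarrow> (\<exists>a. \<forall>x\<in>M. a \<in> f x)"

definition efficient_at ::
  "('x::topological_space \<Rightarrow> 'z::{real_vector,topological_space} set) \<Rightarrow> 'x \<Rightarrow> bool" where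
  "efficient_at f x0 \<longleftrightarrow> (\<exists>U B. open U \<and> x0 \<in> U \<and> tvs_bounded B \<and>
      (\<forall>x\<in>U. f x \<inter> B \<noteq> {}))"

end

theory Submission
  imports Defs
begin

lemma cont_smul_left:
  assumes "tvs TYPE('z::{real_vector,topological_space})"
  shows "continuous_on UNIV (\<lambda>s::real. s *\<^sub>R (a::'z))"
proof -
  have c: "continuous_on UNIV (\<lambda>p::real \<times> 'z. fst p *\<^sub>R snd p)" using assms by (simp add: tvs_def)
  have "continuous_on UNIV (\<lambda>s::real. (s, a))" by (intro continuous_intros)
  from continuous_on_compose[OF this continuous_on_subset[OF c]] show ?thesis by (simp add: o_def)
qed

lemma cont_sub_left:
  assumes "tvs TYPE('z::{real_vector,topological_space})"
  shows "continuous_on UNIV (\<lambda>v::'z. c - v)"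
proof -
  have c1: "continuous_on UNIV (\<lambda>p::real \<times> 'z. fst p *\<^sub>R snd p)"
   and c2: "continuous_on UNIV (\<lambda>p::'z \<times> 'z. fst p + snd p)" using assms by (auto simp add: tvs_def)
  have "continuous_on UNIV (\<lambda>v::'z. (-1::real, v))" by (intro continuous_intros)
  from continuous_on_compose[OF this continuous_on_subset[OF c1]]
  have n: "continuous_on UNIV (\<lambda>v::'z. (-1::real) *\<^sub>R v)" by (simp add: o_def)
  have "continuous_on UNIV (\<lambda>v::'z. (c, (-1::real) *\<^sub>R v))" by (intro continuous_intros n)
  from continuous_on_compose[OF this continuous_on_subset[OF c2]] show ?thesis by (simp add: o_def)
qed

lemma singleton_bounded:
  assumes "tvs TYPE('z::{real_vector,topological_space})"
  shows "tvs_bounded {a::'z}"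
  unfolding tvs_bounded_def
proof (intro allI impI)
  fix U :: "'z set" assume U: "open U \<and> 0 \<in> U"
  have "open ((\<lambda>s::real. s *\<^sub>R a) -` U)"
    using open_vimage[OF _ cont_smul_left[OF assms]] U by auto
  moreover have "(0::real) \<in> (\<lambda>s::real. s *\<^sub>R a) -` U" using U by simp
  ultimately obtain e where e: "e > 0" "ball 0 e \<subseteq> (\<lambda>s::real. s *\<^sub>R a) -` U"
    using open_contains_ball by blast
  show "\<exists>r>0. \<forall>t\<ge>r. {a} \<subseteq> (\<lambda>u. t *\<^sub>R u) ` U"
  proof (intro exI[of _ "2/e"] conjI allI impI)
    show "2/e > 0" using e by simp
    fix t assume t: "2/e \<le> t"
    have tp: "t > 0" using e t by (smt (verit) divide_pos_pos)
    have "2 \<le> t * e" using t e by (simp add: divide_le_eq)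
    hence "1 < t * e" by simp
    hence "1/t < e" using tp by (simp add: divide_less_eq mult.commute)
    hence "(1/t) \<in> ball 0 e" using tp by simp
    hence "(1/t) *\<^sub>R a \<in> U" using e(2) by blast
    moreover have "a = t *\<^sub>R ((1/t) *\<^sub>R a)" using tp by simp
    ultimately show "{a} \<subseteq> (\<lambda>u. t *\<^sub>R u) ` U" by blast
  qed
qed

theorem mainTheorem5:
  fixes f :: "'x::{real_vector,topological_space} \<Rightarrow> 'z::{real_vector,topological_space} set"
    and C :: "'z set" and x0 :: 'x
  assumes "tvs TYPE('x)" and "tvs TYPE('z)"
    and "C \<noteq> {}" and "closed C" and "convex C" and "cone C"
    and "negdual C \<noteq> {\<lambda>_. 0}"
    and "\<forall>x. f x \<in> FZC C"
  shows "((\<exists>U. open U \<and> x0 \<in> U \<and> lattice_bounded_above_on f U) \<longrightarrow> efficient_at f x0)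
       \<and> (interior C \<noteq> {} \<longrightarrow> efficient_at f x0 \<longrightarrow>
            (\<exists>U. open U \<and> x0 \<in> U \<and> lattice_bounded_above_on f U))"
proof (intro conjI impI)
  assume "\<exists>U. open U \<and> x0 \<in> U \<and> lattice_bounded_above_on f U"
  then obtain U a where U: "open U" "x0 \<in> U" "\<forall>x\<in>U. a \<in> f x"
    unfolding lattice_bounded_above_on_def by blast
  show "efficient_at f x0" unfolding efficient_at_def
    using U singleton_bounded[OF assms(2), of a] by blast
next
  assume "interior C \<noteq> {}" and "efficient_at f x0"
  then obtain c where c: "c \<in> interior C" by blast
  from \<open>efficient_at f x0\<close> obtain U B where U: "open U" "x0 \<in> U" "tvs_bounded B"
      "\<forall>x\<in>U. f x \<inter> B \<noteq> {}" unfolding efficient_at_def by blast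
  define V where "V = (\<lambda>v. c - v) -` interior C"
  have "open V" unfolding V_def using open_vimage[OF _ cont_sub_left[OF assms(2)]] by auto
  moreover have "0 \<in> V" using c V_def by simp
  ultimately obtain r where r: "r > 0" "\<forall>t\<ge>r. B \<subseteq> (\<lambda>u. t *\<^sub>R u) ` V"
    using U(3) unfolding tvs_bounded_def by blast
  have key: "r *\<^sub>R c - b \<in> C" if "b \<in> B" for b
  proof -
    from r that obtain v where v: "v \<in> V" "b = r *\<^sub>R v" by blast
    have "c - v \<in> C" using v V_def interior_subset by auto
    hence "r *\<^sub>R (c - v) \<in> C" using assms(6) r unfolding cone_def by auto
    thus ?thesis using v by (simp add: algebra_simps)
  qed
  show "\<exists>U. open U \<and> x0 \<in> U \<and> lattice_bounded_above_on f U"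
    unfolding lattice_bounded_above_on_def
  proof (intro exI[of _ U] conjI U(1,2) exI[of _ "r *\<^sub>R c"] ballI)
    fix x assume "x \<in> U"
    then obtain b where b: "b \<in> f x" "b \<in> B" using U(4) by blast
    have "r *\<^sub>R c = b + (r *\<^sub>R c - b)" by simp
    hence "r *\<^sub>R c \<in> msum (f x) C" unfolding msum_def using b key by blast
    hence "r *\<^sub>R c \<in> closure (msum (f x) C)" using closure_subset by blast
    moreover have "f x = closure (msum (f x) C)" using assms(8) unfolding FZC_def by blast
    ultimately show "r *\<^sub>R c \<in> f x" by simp
  qed
qed

end
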